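(* If $G$ is an infinite, countable, locally finite group, then the number of ends of $G$ is infinite.
   Context: A group is locally finite if every finite subset is contained in a finite subgroup. For a countable group $G$ equipped with a proper left-invariant metric, the number of ends of $G$ is the cardinality of $CF(G)\setminus G$, where $CF(X)$, for a proper metric space $X$, is the compactification induced by all continuous glacially oscillating functions $X\to[0,1]$. A glacial scale on $X$ is a sequence $\mathcal S=\{(K_i,n_i)\}_{i\ge1}$, $K_i$ bounded, $n_i\in\mathbb N$, such that for every bounded $K$ and $r>0$ there is $i$ with $K\subset K_i$, $n_i>r$; an $\mathcal S$-chain is a finite sequence $x_1,\dots,x_n$ with, for each $i\le n-1$, some $m$ with $x_i,x_{i+1}\notin K_m$ and $d(x_i,x_{i+1})\le n_m$; $f$ is glacially oscillating if for every $\epsilon>0$ there is a glacial scale $\mathcal S$ with $|f(x_1)-f(x_n)|<\epsilon$ for all $\mathcal S$-chains. *)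

theory Defs
  imports "HOL-Analysis.Analysis" "HOL-Algebra.Group"
begin

definition proper_metric :: "'a set \<Rightarrow> ('a \<Rightarrow> 'a \<Rightarrow> real) \<Rightarrow> bool" where
  "proper_metric M d \<longleftrightarrow> Metric_space M d \<and>
     (\<forall>x\<in>M. \<forall>r. compactin (Metric_space.mtopology M d) (Metric_space.mcball M d x r))"

definition glacial_scale :: "'a set \<Rightarrow> ('a \<Rightarrow> 'a \<Rightarrow> real) \<Rightarrow> (nat \<Rightarrow> 'a set \<times> nat) \<Rightarrow> bool" where
  "glacial_scale M d S \<longleftrightarrow>
     (\<forall>i. fst (S i) \<subseteq> M \<and> Metric_space.mbounded M d (fst (S i))) \<and>
     (\<forall>K r. K \<subseteq> M \<and> Metric_space.mbounded M d K \<and> r > 0 \<longrightarrow>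
        (\<exists>i. K \<subseteq> fst (S i) \<and> real (snd (S i)) > r))"

definition glacial_chain :: "'a set \<Rightarrow> ('a \<Rightarrow> 'a \<Rightarrow> real) \<Rightarrow> (nat \<Rightarrow> 'a set \<times> nat) \<Rightarrow> 'a list \<Rightarrow> bool" where
  "glacial_chain M d S xs \<longleftrightarrow> xs \<noteq> [] \<and> set xs \<subseteq> M \<and>
     (\<forall>i. Suc i < length xs \<longrightarrow>
        (\<exists>m. xs ! i \<notin> fst (S m) \<and> xs ! Suc i \<notin> fst (S m) \<and>
             d (xs ! i) (xs ! Suc i) \<le> real (snd (S m))))"

definition glacially_oscillating :: "'a set \<Rightarrow> ('a \<Rightarrow> 'a \<Rightarrow> real) \<Rightarrow> ('a \<Rightarrow> real) \<Rightarrow> bool" where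
  "glacially_oscillating M d f \<longleftrightarrow>
     (\<forall>\<epsilon>>0. \<exists>S. glacial_scale M d S \<and>
        (\<forall>xs. glacial_chain M d S xs \<longrightarrow> \<bar>f (hd xs) - f (last xs)\<bar> < \<epsilon>))"

definition CF_family :: "'a set \<Rightarrow> ('a \<Rightarrow> 'a \<Rightarrow> real) \<Rightarrow> ('a \<Rightarrow> real) set" where
  "CF_family M d = {f. f \<in> extensional M \<and> f ` M \<subseteq> {0..1} \<and>
      continuous_map (Metric_space.mtopology M d) euclideanreal f \<and>
      glacially_oscillating M d f}"

definition CF_eval :: "'a set \<Rightarrow> ('a \<Rightarrow> 'a \<Rightarrow> real) \<Rightarrow> 'a \<Rightarrow> (('a \<Rightarrow> real) \<Rightarrow> real)" where
  "CF_eval M d x = (\<lambda>f\<in>CF_family M d. f x)"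

definition CF_topology :: "'a set \<Rightarrow> ('a \<Rightarrow> 'a \<Rightarrow> real) \<Rightarrow> (('a \<Rightarrow> real) \<Rightarrow> real) topology" where
  "CF_topology M d = product_topology (\<lambda>_. subtopology euclideanreal {0..1}) (CF_family M d)"

definition CF :: "'a set \<Rightarrow> ('a \<Rightarrow> 'a \<Rightarrow> real) \<Rightarrow> (('a \<Rightarrow> real) \<Rightarrow> real) set" where
  "CF M d = (CF_topology M d) closure_of (CF_eval M d ` M)"

definition ends :: "'a set \<Rightarrow> ('a \<Rightarrow> 'a \<Rightarrow> real) \<Rightarrow> (('a \<Rightarrow> real) \<Rightarrow> real) set" where
  "ends M d = CF M d - CF_eval M d ` M"

definition locally_finite_group :: "('a, 'b) monoid_scheme \<Rightarrow> bool" where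
  "locally_finite_group G \<longleftrightarrow>
     (\<forall>S. finite S \<and> S \<subseteq> carrier G \<longrightarrow> (\<exists>H. subgroup H G \<and> finite H \<and> S \<subseteq> H))"

definition left_invariant_metric :: "('a, 'b) monoid_scheme \<Rightarrow> ('a \<Rightarrow> 'a \<Rightarrow> real) \<Rightarrow> bool" where
  "left_invariant_metric G d \<longleftrightarrow>
     (\<forall>g\<in>carrier G. \<forall>x\<in>carrier G. \<forall>y\<in>carrier G. d (g \<otimes>\<^bsub>G\<^esub> x) (g \<otimes>\<^bsub>G\<^esub> y) = d x y)"

end

theory Submission
  imports Defs
begin

locale lfg = group G for G :: "('a, 'b) monoid_scheme" (structure) +
  fixes d :: "'a \<Rightarrow> 'a \<Rightarrow> real"
  assumes inf: "infinite (carrier G)"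
    and cnt: "countable (carrier G)"
    and lf: "locally_finite_group G"
    and pm: "proper_metric (carrier G) d"
    and li: "left_invariant_metric G d"
begin

sublocale Metric_space "carrier G" d
  using pm by (simp add: proper_metric_def)

lemma cball_compact: "x \<in> carrier G \<Longrightarrow> compactin mtopology (mcball x r)"
  using pm by (simp add: proper_metric_def)

lemma dinv: "g \<in> carrier G \<Longrightarrow> x \<in> carrier G \<Longrightarrow> y \<in> carrier G \<Longrightarrow> d (g \<otimes> x) (g \<otimes> y) = d x y"
  using li by (simp add: left_invariant_metric_def)

lemma isolated_point: "\<exists>x\<in>carrier G. openin mtopology {x}"
proof (rule ccontr)
  assume H: "\<not> ?thesis"
  have "mtopology interior_of \<Union>((\<lambda>x. {x}) ` carrier G) = {}"
  proof (rule Baire_category_alt)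
    have "locally_compact_space mtopology"
      unfolding locally_compact_space_def
    proof
      fix x assume "x \<in> topspace mtopology"
      then have x: "x \<in> carrier G" by simp
      show "\<exists>U K. openin mtopology U \<and> compactin mtopology K \<and> x \<in> U \<and> U \<subseteq> K"
        apply (rule exI[of _ "mball x 1"], rule exI[of _ "mcball x 1"])
        using x cball_compact mball_subset_mcball by simp
    qed
    then show "completely_metrizable_space mtopology \<or> locally_compact_space mtopology \<and> regular_space mtopology"
      using regular_space_mtopology by blast
    show "countable ((\<lambda>x. {x}) ` carrier G)" using cnt by simp
    fix T assume "T \<in> (\<lambda>x. {x}) ` carrier G"
    then obtain x where x: "x \<in> carrier G" "T = {x}" by blast
    have "t1_space mtopology"
      by (simp add: Hausdorff_imp_t1_space Hausdorff_space_mtopology)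
    then have "closedin mtopology T" using x closedin_t1_singleton[of mtopology x] by simp
    moreover have "mtopology interior_of T = {}"
    proof -
      have "mtopology interior_of T \<subseteq> {x}" using x interior_of_subset by simp
      moreover have "mtopology interior_of T \<noteq> {x}" using H x interior_of_eq[of mtopology "{x}"] by auto
      ultimately show ?thesis by (simp add: subset_singleton_iff)
    qed
    ultimately show "closedin mtopology T \<and> mtopology interior_of T = {}" by simp
  qed
  moreover have "\<Union>((\<lambda>x. {x}) ` carrier G) = topspace mtopology" by simp
  moreover have "mtopology interior_of carrier G = carrier G" using interior_of_topspace[of mtopology] by simp
  ultimately have "carrier G = {}" by simp
  then show False using one_closed by blast
qed


lemma uniform_discrete:
  "\<exists>\<delta>>0. \<forall>y\<in>carrier G. \<forall>z\<in>carrier G. d y z < \<delta> \<longrightarrow> y = z"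
proof -
  obtain x0 where x0: "x0 \<in> carrier G" "openin mtopology {x0}" using isolated_point by blast
  then obtain r where r: "r > 0" "mball x0 r \<subseteq> {x0}" using openin_mtopology[of "{x0}"] by auto
  have *: "y = z" if yz: "y \<in> carrier G" "z \<in> carrier G" "d y z < r" for y z
  proof -
    let ?g = "x0 \<otimes> inv y"
    have g: "?g \<in> carrier G" using x0 yz by simp
    have gy: "?g \<otimes> y = x0" using x0 yz by (simp add: m_assoc)
    have gz: "?g \<otimes> z \<in> carrier G" using g yz by simp
    have "d x0 (?g \<otimes> z) = d y z" using dinv[OF g, of y z] gy yz by simp
    then have "?g \<otimes> z \<in> mball x0 r" using yz x0 gz by simp
    then have "?g \<otimes> z = ?g \<otimes> y" using r(2) gy by auto
    then have "inv ?g \<otimes> (?g \<otimes> z) = inv ?g \<otimes> (?g \<otimes> y)" by simp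
    then show ?thesis using g yz by (simp add: m_assoc[symmetric])
  qed
  then show ?thesis using r(1) by blast
qed

lemma open_all: "S \<subseteq> carrier G \<Longrightarrow> openin mtopology S"
proof -
  assume S: "S \<subseteq> carrier G"
  obtain \<delta> where dl: "\<delta> > 0" "\<And>y z. y \<in> carrier G \<Longrightarrow> z \<in> carrier G \<Longrightarrow> d y z < \<delta> \<Longrightarrow> y = z"
    using uniform_discrete by blast
  have "mball x \<delta> \<subseteq> S" if "x \<in> S" for x
  proof
    fix z assume "z \<in> mball x \<delta>"
    then have "x = z" using dl(2)[of x z] by simp
    then show "z \<in> S" using that by simp
  qed
  then show ?thesis using S dl(1) openin_mtopology by blast
qed

lemma bounded_finite: "mbounded S \<Longrightarrow> finite S"
proof -
  assume "mbounded S"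
  then obtain x B where SB: "S \<subseteq> mcball x B" by (auto simp: mbounded_def)
  obtain \<delta> where dl: "\<delta> > 0" "\<And>y z. y \<in> carrier G \<Longrightarrow> z \<in> carrier G \<Longrightarrow> d y z < \<delta> \<Longrightarrow> y = z"
    using uniform_discrete by blast
  have "finite (mcball x B)"
  proof (cases "x \<in> carrier G")
    case False
    then have "mcball x B = {}" by auto
    then show ?thesis by simp
  next
    case True
    let ?K = "mcball x B"
    have cK: "compactin mtopology ?K" using cball_compact True by blast
    have "\<forall>U\<in>(\<lambda>y. mball y \<delta>) ` ?K. openin mtopology U" by auto
    moreover have "?K \<subseteq> \<Union>((\<lambda>y. mball y \<delta>) ` ?K)" using dl(1) by auto
    ultimately obtain \<F> where F: "finite \<F>" "\<F> \<subseteq> (\<lambda>y. mball y \<delta>) ` ?K" "?K \<subseteq> \<Union>\<F>"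
      using cK unfolding compactin_def by meson
    then obtain F' where F': "F' \<subseteq> ?K" "finite F'" "\<F> = (\<lambda>y. mball y \<delta>) ` F'"
      by (meson finite_subset_image)
    have "\<Union>\<F> \<subseteq> F'"
    proof
      fix z assume "z \<in> \<Union>\<F>"
      then obtain y where y: "y \<in> F'" "z \<in> mball y \<delta>" using F' by auto
      then have "y = z" using dl(2)[of y z] by simp
      then show "z \<in> F'" using y by simp
    qed
    have "mcball x B \<subseteq> F'" using F(3) \<open>\<Union>\<F> \<subseteq> F'\<close> by (rule subset_trans)
    then show ?thesis using F'(2) by (rule finite_subset)
  qed
  then show ?thesis using SB by (simp add: finite_subset)
qed

lemma finite_mbounded: "finite S \<Longrightarrow> S \<subseteq> carrier G \<Longrightarrow> mbounded S"
  by (induction S rule: finite_induct) (auto simp: mbounded_insert)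

definition newpt :: "'a set \<Rightarrow> 'a" where
  "newpt A = (SOME x. x \<in> carrier G - A)"

definition grow :: "'a set \<Rightarrow> nat \<Rightarrow> 'a set" where
  "grow A k = (SOME H. subgroup H G \<and> finite H \<and> A \<union> mcball \<one> (real k) \<union> {newpt A} \<subseteq> H)"

lemma grow:
  assumes "finite A" "A \<subseteq> carrier G"
  shows "subgroup (grow A k) G \<and> finite (grow A k) \<and> A \<union> mcball \<one> (real k) \<union> {newpt A} \<subseteq> grow A k"
    and "newpt A \<in> carrier G - A"
proof -
  have "carrier G - A \<noteq> {}"
  proof
    assume "carrier G - A = {}"
    then have "carrier G \<subseteq> A" by simp
    then have "finite (carrier G)" using assms(1) by (rule finite_subset)
    then show False using inf by simp
  qed
  then have "\<exists>x. x \<in> carrier G - A" by blast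
  then show np: "newpt A \<in> carrier G - A" unfolding newpt_def by (rule someI_ex)
  have "finite (mcball \<one> (real k))" using bounded_finite[OF mbounded_mcball] .
  then have f: "finite (A \<union> mcball \<one> (real k) \<union> {newpt A})" using assms by simp
  have c: "A \<union> mcball \<one> (real k) \<union> {newpt A} \<subseteq> carrier G" using assms np by auto
  have "\<exists>H. subgroup H G \<and> finite H \<and> A \<union> mcball \<one> (real k) \<union> {newpt A} \<subseteq> H"
    using lf[unfolded locally_finite_group_def, rule_format, OF conjI[OF f c]] .
  then show "subgroup (grow A k) G \<and> finite (grow A k) \<and> A \<union> mcball \<one> (real k) \<union> {newpt A} \<subseteq> grow A k"
    unfolding grow_def by (rule someI_ex)
qed

fun Hs :: "nat \<Rightarrow> 'a set" where
  "Hs 0 = grow {} 0"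
| "Hs (Suc k) = grow (Hs k) (Suc k)"

lemma Hs_props: "subgroup (Hs k) G \<and> finite (Hs k) \<and> mcball \<one> (real k) \<subseteq> Hs k"
proof (induction k)
  case 0
  then show ?case using grow(1)[of "{}" 0] by simp
next
  case (Suc k)
  then have "Hs k \<subseteq> carrier G" using subgroup.subset by blast
  then show ?case using grow(1)[of "Hs k" "Suc k"] Suc by simp
qed

lemma Hs_sub: "subgroup (Hs k) G" using Hs_props by blast
lemma Hs_fin: "finite (Hs k)" using Hs_props by blast
lemma Hs_ball: "mcball \<one> (real k) \<subseteq> Hs k" using Hs_props by blast
lemma Hs_carrier: "Hs k \<subseteq> carrier G" using subgroup.subset[OF Hs_sub] .

lemma Hs_Suc: "Hs k \<subseteq> Hs (Suc k) \<and> newpt (Hs k) \<in> Hs (Suc k) - Hs k"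
  using grow(1)[of "Hs k" "Suc k"] grow(2)[of "Hs k"] Hs_fin Hs_carrier by auto

lemma Hs_mono: "j \<le> k \<Longrightarrow> Hs j \<subseteq> Hs k"
  by (rule lift_Suc_mono_le[of Hs]) (use Hs_Suc in auto)

definition level :: "'a \<Rightarrow> nat" where
  "level x = (LEAST k. x \<in> Hs k)"

lemma in_some: "x \<in> carrier G \<Longrightarrow> \<exists>k. x \<in> Hs k"
proof -
  assume x: "x \<in> carrier G"
  have "d \<one> x \<le> real (nat \<lceil>d \<one> x\<rceil>)" by linarith
  then have "x \<in> mcball \<one> (real (nat \<lceil>d \<one> x\<rceil>))" using x by simp
  with Hs_ball[of "nat \<lceil>d \<one> x\<rceil>"] have "x \<in> Hs (nat \<lceil>d \<one> x\<rceil>)" by (rule subsetD)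
  then show ?thesis ..
qed

lemma level_eq: "x \<in> Hs k \<Longrightarrow> (\<And>j. j < k \<Longrightarrow> x \<notin> Hs j) \<Longrightarrow> level x = k"
  unfolding level_def
proof (rule Least_equality)
  fix y assume "x \<in> Hs k" "\<And>j. j < k \<Longrightarrow> x \<notin> Hs j" "x \<in> Hs y"
  then show "k \<le> y" using not_le by blast
qed

lemma level_realized: "\<exists>x\<in>carrier G. level x = k"
proof (cases k)
  case 0
  have "\<one> \<in> Hs 0" using Hs_sub subgroup.one_closed by blast
  then show ?thesis using 0 level_eq[of "\<one>" 0] by auto
next
  case (Suc j)
  let ?x = "newpt (Hs j)"
  have x: "?x \<in> Hs (Suc j)" "?x \<notin> Hs j" using Hs_Suc by auto
  have "?x \<notin> Hs i" if "i < Suc j" for i using x Hs_mono[of i j] that by auto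
  then have "level ?x = Suc j" using level_eq[of ?x "Suc j"] x by blast
  then show ?thesis using Suc x Hs_carrier by blast
qed

lemma same_membership:
  assumes x: "x \<in> carrier G" and y: "y \<in> carrier G"
    and xm: "x \<notin> Hs m" and ym: "y \<notin> Hs m" and dxy: "d x y \<le> real m"
  shows "x \<in> Hs j \<longleftrightarrow> y \<in> Hs j"
proof (cases "j \<le> m")
  case True
  then show ?thesis using Hs_mono[OF True] xm ym by blast
next
  case False
  let ?h = "inv x \<otimes> y"
  have h: "?h \<in> carrier G" using x y by simp
  have "d \<one> ?h = d x y" using dinv[of "inv x" x y] x y by simp
  then have "?h \<in> mcball \<one> (real m)" using h dxy by simp
  with Hs_ball[of m] have hm: "?h \<in> Hs m" by (rule subsetD)
  have "Hs m \<subseteq> Hs j" using Hs_mono[of m j] False by simp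
  then have "?h \<in> Hs j" using hm by (rule subsetD)
  have yeq: "y = x \<otimes> ?h" using x y by (simp add: m_assoc[symmetric])
  have xeq: "x = y \<otimes> inv ?h" using x y h by (simp add: inv_mult_group m_assoc[symmetric])
  show ?thesis
  proof
    assume "x \<in> Hs j"
    then show "y \<in> Hs j" using yeq \<open>?h \<in> Hs j\<close> Hs_sub subgroup.m_closed by metis
  next
    assume "y \<in> Hs j"
    then show "x \<in> Hs j" using xeq \<open>?h \<in> Hs j\<close> Hs_sub subgroup.m_closed subgroup.m_inv_closed by metis
  qed
qed

definition scale :: "nat \<Rightarrow> 'a set \<times> nat" where
  "scale i = (Hs i, i)"

lemma scale_glacial: "glacial_scale (carrier G) d scale"
  unfolding glacial_scale_def
proof (rule conjI)
  show "\<forall>i. fst (scale i) \<subseteq> carrier G \<and> mbounded (fst (scale i))"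
    using Hs_carrier Hs_fin finite_mbounded by (simp add: scale_def)
next
  show "\<forall>K r. K \<subseteq> carrier G \<and> mbounded K \<and> r > 0 \<longrightarrow>
        (\<exists>i. K \<subseteq> fst (scale i) \<and> real (snd (scale i)) > r)"
  proof (intro allI impI)
  fix K and r :: real
  assume K: "K \<subseteq> carrier G \<and> mbounded K \<and> r > 0"
  then obtain x B where SB: "K \<subseteq> mcball x B" by (auto simp: mbounded_def)
  show "\<exists>i. K \<subseteq> fst (scale i) \<and> real (snd (scale i)) > r"
  proof (cases "x \<in> carrier G")
    case False
    then have "K = {}" using SB by auto
    moreover have "real (nat \<lceil>r\<rceil> + 1) > r" by linarith
    ultimately show ?thesis unfolding scale_def by (intro exI[of _ "nat \<lceil>r\<rceil> + 1"]) simp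
  next
    case True
    define i where "i = nat \<lceil>max r (B + d \<one> x)\<rceil> + 1"
    have ir: "real i > r" "real i \<ge> B + d \<one> x" unfolding i_def by linarith+
    have "K \<subseteq> mcball \<one> (real i)"
    proof
      fix z assume "z \<in> K"
      then have z: "z \<in> carrier G" "d x z \<le> B" using SB by auto
      have "d \<one> z \<le> d \<one> x + d x z" using triangle True z by simp
      then show "z \<in> mcball \<one> (real i)" using z ir by simp
    qed
    then show ?thesis using Hs_ball[of i] ir by (auto simp: scale_def)
  qed
  qed
qed

lemma chain_level:
  assumes "glacial_chain (carrier G) d scale xs"
  shows "i < length xs \<Longrightarrow> level (xs ! i) = level (xs ! 0)"
proof (induction i)
  case 0 then show ?case by simp
next
  case (Suc i)
  obtain m where m: "xs ! i \<notin> Hs m" "xs ! Suc i \<notin> Hs m" "d (xs ! i) (xs ! Suc i) \<le> real m"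
    using assms Suc.prems unfolding glacial_chain_def scale_def by auto
  have c: "xs ! i \<in> carrier G" "xs ! Suc i \<in> carrier G"
    using assms Suc.prems nth_mem unfolding glacial_chain_def by (metis Suc_lessD subsetD)+
  have "\<And>j. xs ! i \<in> Hs j \<longleftrightarrow> xs ! Suc i \<in> Hs j" using same_membership[OF c m] by blast
  then have "level (xs ! Suc i) = level (xs ! i)" unfolding level_def by simp
  then show ?case using Suc by simp
qed

definition Fn :: "(nat \<Rightarrow> real) \<Rightarrow> 'a \<Rightarrow> real" where
  "Fn \<phi> = restrict (\<lambda>x. \<phi> (level x)) (carrier G)"

lemma Fn_in:
  assumes "range \<phi> \<subseteq> {0..1}"
  shows "Fn \<phi> \<in> CF_family (carrier G) d"
  unfolding CF_family_def
proof (intro CollectI conjI)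
  show "Fn \<phi> \<in> extensional (carrier G)" by (simp add: Fn_def)
  show "Fn \<phi> ` carrier G \<subseteq> {0..1}" using assms by (auto simp: Fn_def)
  show "continuous_map mtopology euclideanreal (Fn \<phi>)"
    unfolding continuous_map_def using open_all by auto
  show "glacially_oscillating (carrier G) d (Fn \<phi>)"
    unfolding glacially_oscillating_def
  proof (intro allI impI)
    fix \<epsilon> :: real assume e: "\<epsilon> > 0"
    have "\<bar>Fn \<phi> (hd xs) - Fn \<phi> (last xs)\<bar> < \<epsilon>" if ch: "glacial_chain (carrier G) d scale xs" for xs
    proof -
      have ne: "xs \<noteq> []" and sub: "set xs \<subseteq> carrier G" using ch unfolding glacial_chain_def by auto
      have "level (last xs) = level (hd xs)"
        using chain_level[OF ch, of "length xs - 1"] ne by (simp add: hd_conv_nth last_conv_nth)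
      moreover have "hd xs \<in> carrier G" "last xs \<in> carrier G" using ne sub by auto
      ultimately show ?thesis using e by (simp add: Fn_def)
    qed
    then show "\<exists>S. glacial_scale (carrier G) d S \<and>
        (\<forall>xs. glacial_chain (carrier G) d S xs \<longrightarrow> \<bar>Fn \<phi> (hd xs) - Fn \<phi> (last xs)\<bar> < \<epsilon>)"
      using scale_glacial by blast
  qed
qed


lemma CF_compact: "compact_space (CF_topology (carrier G) d)"
proof -
  have "compact_space (subtopology euclideanreal {0..1::real})"
    by (rule compact_space_subtopology) simp
  then show ?thesis unfolding CF_topology_def compact_space_product_topology by simp
qed

lemma eval_top: "x \<in> carrier G \<Longrightarrow> CF_eval (carrier G) d x \<in> topspace (CF_topology (carrier G) d)"
  unfolding CF_topology_def CF_eval_def by (auto simp: CF_family_def)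

lemma closed_val:
  assumes f: "f \<in> CF_family (carrier G) d"
  shows "closedin (CF_topology (carrier G) d) {q \<in> topspace (CF_topology (carrier G) d). q f = c}"
proof -
  have "continuous_map (CF_topology (carrier G) d) euclideanreal (\<lambda>q. q f)"
    unfolding CF_topology_def
    by (rule continuous_map_into_fulltopology[OF continuous_map_product_projection[OF f]])
  moreover have "closedin euclideanreal {c}" by (simp flip: closed_closedin)
  ultimately have "closedin (CF_topology (carrier G) d) {q \<in> topspace (CF_topology (carrier G) d). q f \<in> {c}}"
    by (rule closedin_continuous_map_preimage)
  then show ?thesis by simp
qed

lemma end_exists:
  assumes P: "\<forall>n. \<exists>k\<ge>n. P k"
  shows "\<exists>p. p \<in> ends (carrier G) d \<and>
     (\<forall>\<phi> c. range \<phi> \<subseteq> {0..1} \<longrightarrow> (\<forall>k. P k \<longrightarrow> \<phi> k = c) \<longrightarrow> p (Fn \<phi>) = c)"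
proof -
  let ?X = "CF_topology (carrier G) d"
  let ?e = "CF_eval (carrier G) d"
  define A where "A n = {x \<in> carrier G. P (level x) \<and> n \<le> level x}" for n
  define C where "C n = ?X closure_of (?e ` A n)" for n
  have Atop: "?e ` A n \<subseteq> topspace ?X" for n using eval_top by (auto simp: A_def)
  have "(\<Inter>n. C n) \<noteq> {}"
  proof (rule compact_space_imp_nest[OF CF_compact])
    show "closedin ?X (C n)" for n by (simp add: C_def)
    show "C n \<noteq> {}" for n
    proof -
      obtain k where k: "k \<ge> n" "P k" using P by blast
      obtain x where x: "x \<in> carrier G" "level x = k" using level_realized by blast
      have "?e x \<in> ?e ` A n" using x k by (auto simp: A_def)
      then show ?thesis using closure_of_subset[OF Atop[of n]] by (auto simp: C_def)
    qed
    show "decseq C" unfolding decseq_def C_def A_def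
      by (intro allI impI closure_of_mono image_mono) auto
  qed
  then obtain p where p: "\<And>n. p \<in> C n" by blast
  have val: "p f = c" if f: "f \<in> CF_family (carrier G) d" and h: "\<And>x. x \<in> A n \<Longrightarrow> f x = c" for f c n
  proof -
    have "?e ` A n \<subseteq> {q \<in> topspace ?X. q f = c}" using Atop h f by (auto simp: CF_eval_def A_def)
    then have "C n \<subseteq> {q \<in> topspace ?X. q f = c}" unfolding C_def using closed_val[OF f]
      by (rule closure_of_minimal)
    then show ?thesis using p[of n] by blast
  qed
  have pCF: "p \<in> CF (carrier G) d"
  proof -
    have "C 0 \<subseteq> CF (carrier G) d" unfolding C_def CF_def A_def
      by (intro closure_of_mono image_mono) auto
    then show ?thesis using p[of 0] by blast
  qed
  have pnot: "p \<notin> ?e ` carrier G"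
  proof
    assume "p \<in> ?e ` carrier G"
    then obtain y where y: "y \<in> carrier G" "p = ?e y" by blast
    define \<theta> where "\<theta> = (\<lambda>k::nat. if Suc (level y) \<le> k then 1 else 0 :: real)"
    have \<theta>r: "range \<theta> \<subseteq> {0..1}" by (auto simp: \<theta>_def)
    have "p (Fn \<theta>) = 1"
      by (rule val[OF Fn_in[OF \<theta>r], of "Suc (level y)"]) (auto simp: A_def Fn_def \<theta>_def)
    moreover have "p (Fn \<theta>) = 0" using y Fn_in[OF \<theta>r] by (simp add: CF_eval_def Fn_def \<theta>_def)
    ultimately show False by simp
  qed
  have "\<forall>\<phi> c. range \<phi> \<subseteq> {0..1} \<longrightarrow> (\<forall>k. P k \<longrightarrow> \<phi> k = c) \<longrightarrow> p (Fn \<phi>) = c"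
  proof (intro allI impI)
    fix \<phi> :: "nat \<Rightarrow> real" and c assume r: "range \<phi> \<subseteq> {0..1}" and h: "\<forall>k. P k \<longrightarrow> \<phi> k = c"
    show "p (Fn \<phi>) = c"
      by (rule val[OF Fn_in[OF r], of 0]) (use h in \<open>auto simp: A_def Fn_def\<close>)
  qed
  moreover have "p \<in> ends (carrier G) d" using pCF pnot by (simp add: ends_def)
  ultimately show ?thesis by blast
qed

lemma infinite_ends: "infinite (ends (carrier G) d)"
proof -
  define P where "P r k = (fst (prod_decode k) = r)" for r k
  define Q where "Q r q \<longleftrightarrow> q \<in> ends (carrier G) d \<and>
     (\<forall>\<phi> c. range \<phi> \<subseteq> {0..1} \<longrightarrow> (\<forall>k. P r k \<longrightarrow> \<phi> k = c) \<longrightarrow> q (Fn \<phi>) = c)" for r q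
  have Pn: "\<forall>n. \<exists>k\<ge>n. P r k" for r
  proof
    fix n show "\<exists>k\<ge>n. P r k"
      by (rule exI[of _ "prod_encode (r,n)"]) (simp add: P_def le_prod_encode_2)
  qed
  have ex: "\<exists>q. Q r q" for r unfolding Q_def by (rule end_exists[OF Pn])
  define p where "p r = (SOME q. Q r q)" for r
  have pQ: "Q r (p r)" for r unfolding p_def by (rule someI_ex[OF ex])
  have inj: "inj p"
  proof
    fix r s assume eq: "p r = p s"
    show "r = s"
    proof (rule ccontr)
      assume ne: "r \<noteq> s"
      define \<phi> where "\<phi> = (\<lambda>k. if P r k then 1 else 0 :: real)"
      have r\<phi>: "range \<phi> \<subseteq> {0..1}" by (auto simp: \<phi>_def)
      have h1: "\<And>k. P r k \<Longrightarrow> \<phi> k = 1" by (simp add: \<phi>_def)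
      have h0: "\<And>k. P s k \<Longrightarrow> \<phi> k = 0" using ne by (simp add: \<phi>_def P_def)
      have "p r (Fn \<phi>) = 1" using conjunct2[OF pQ[of r, unfolded Q_def], rule_format, OF r\<phi> h1] .
      moreover have "p s (Fn \<phi>) = 0" using conjunct2[OF pQ[of s, unfolded Q_def], rule_format, OF r\<phi> h0] .
      ultimately show False using eq by simp
    qed
  qed
  have sub: "range p \<subseteq> ends (carrier G) d" using pQ by (auto simp: Q_def)
  have inf: "infinite (range p)"
  proof
    assume "finite (range p)"
    then have "finite (UNIV :: nat set)" using inj by (rule finite_imageD)
    then show False by simp
  qed
  show ?thesis
  proof
    assume "finite (ends (carrier G) d)"
    then have "finite (range p)" using sub by (simp add: finite_subset)
    then show False using inf by simp
  qed
qed

end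

theorem proposition5p6:
  fixes G :: "('a, 'b) monoid_scheme" and d :: "'a \<Rightarrow> 'a \<Rightarrow> real"
  assumes "group G"
    and "infinite (carrier G)"
    and "countable (carrier G)"
    and "locally_finite_group G"
    and "proper_metric (carrier G) d"
    and "left_invariant_metric G d"
  shows "infinite (ends (carrier G) d)"
proof -
  interpret lfg G d using assms by (simp add: lfg_def lfg_axioms_def)
  show ?thesis by (rule infinite_ends)
qed

end
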